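(* Let $(a,b,c,\lambda)\in(\mathbb F^\times)^4$ and let $O$ be a $\triangle_q$-submodule of $M_\lambda(a,b,c)$ with $m_0\notin O$. Then: (i) $m_0+O$ is a marginal weight vector of $M_\lambda(a,b,c)/O$ with weight $b\lambda^{-1}$; (ii) $m_0+O$ is a marginal weight vector of $M_\lambda(a,b,c)/O$ with weight $b^{-1}\lambda$ if and only if $b\lambda^{-1}=b^{-1}\lambda$, or $m_0+O$ and $m_1+O$ are linearly dependent.
   Context: $\mathbb F$ is an algebraically closed field and $q\in\mathbb F^\times$ a root of unity of order $d\notin\{1,2,4\}$. $\triangle_q$ is the unital associative $\mathbb F$-algebra with generators $A,B,C$ subject to: each of $A+\frac{qBC-q^{-1}CB}{q^2-q^{-2}}$, $B+\frac{qCA-q^{-1}AC}{q^2-q^{-2}}$, $C+\frac{qAB-q^{-1}BA}{q^2-q^{-2}}$ is central; $\alpha,\beta,\gamma$ are these times $q+q^{-1}$. For a $\triangle_q$-module $V$ and $\mu\in\mathbb F^\times$ let $V(\mu)=\{v\in V: Bv=(\mu+\mu^{-1})v\}$; a marginal weight vector of $V$ with weight $\mu$ is a nonzero $v\in V(\mu)$ that is an eigenvector of $(B-\mu q^2-\mu^{-1}q^{-2})A$. For $(a,b,c,\lambda)\in(\mathbb F^\times)^4$, $i\in\mathbb N$: $\theta_i=a\lambda^{-1}q^{2i}+a^{-1}\lambda q^{-2i}$, $\theta_i^*=b\lambda^{-1}q^{2i}+b^{-1}\lambda q^{-2i}$, $\varphi_i=a^{-1}b^{-1}\lambda q(q^i-q^{-i})(\lambda^{-1}q^{i-1}-\lambda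 q^{1-i})(q^{-i}-abc\lambda^{-1}q^{i-1})(q^{-i}-abc^{-1}\lambda^{-1}q^{i-1})$. $M_\lambda(a,b,c)$ is the $\triangle_q$-module with basis $\{m_i\}_{i\in\mathbb N}$, $(A-\theta_i)m_i=m_{i+1}$, $(B-\theta_i^* )m_i=\varphi_im_{i-1}$, with $\alpha,\beta,\gamma$ acting as $(b+b^{-1})(c+c^{-1})+(a+a^{-1})(\lambda q+\lambda^{-1}q^{-1})$, $(c+c^{-1})(a+a^{-1})+(b+b^{-1})(\lambda q+\lambda^{-1}q^{-1})$, $(a+a^{-1})(b+b^{-1})+(c+c^{-1})(\lambda q+\lambda^{-1}q^{-1})$. *)

theory Defs
  imports "HOL-Computational_Algebra.Polynomial"
begin

definition root_of_unity :: "'a::field \<Rightarrow> bool" where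
  "root_of_unity q \<longleftrightarrow> (\<exists>n>0. q ^ n = 1)"

definition unity_order :: "'a::field \<Rightarrow> nat" where
  "unity_order q = (LEAST n. n > 0 \<and> q ^ n = 1)"

definition theta :: "'a::field \<Rightarrow> 'a \<Rightarrow> 'a \<Rightarrow> nat \<Rightarrow> 'a" where
  "theta q a lam i = a / lam * q ^ (2*i) + lam / (a * q ^ (2*i))"

definition thetas :: "'a::field \<Rightarrow> 'a \<Rightarrow> 'a \<Rightarrow> nat \<Rightarrow> 'a" where
  "thetas q b lam i = b / lam * q ^ (2*i) + lam / (b * q ^ (2*i))"

definition phi :: "'a::field \<Rightarrow> 'a \<Rightarrow> 'a \<Rightarrow> 'a \<Rightarrow> 'a \<Rightarrow> nat \<Rightarrow> 'a" where
  "phi q a b c lam i =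
     lam / (a * b) * q * (q ^ i - inverse q ^ i)
     * (inverse lam * q ^ i / q - lam * q / q ^ i)
     * (inverse q ^ i - a * b * c / lam * q ^ i / q)
     * (inverse q ^ i - a * b / (c * lam) * q ^ i / q)"

text \<open>Elements of M_lambda(a,b,c) are represented by their coordinate
  sequences with respect to the basis m_0, m_1, ...: finitely supported
  functions nat => F.\<close>
definition fin_supp :: "(nat \<Rightarrow> 'a::zero) \<Rightarrow> bool" where
  "fin_supp v \<longleftrightarrow> finite {i. v i \<noteq> 0}"

definition basis_vec :: "nat \<Rightarrow> nat \<Rightarrow> 'a::{zero,one}" ("m") where
  "basis_vec j = (\<lambda>i. if i = j then 1 else 0)"

text \<open>Action of A: (A - theta_i) m_i = m_{i+1}.\<close>
definition actA :: "'a::field \<Rightarrow> 'a \<Rightarrow> 'a \<Rightarrow> (nat \<Rightarrow> 'a) \<Rightarrow> (nat \<Rightarrow> 'a)" where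
  "actA q a lam v = (\<lambda>i. theta q a lam i * v i + (if i = 0 then 0 else v (i - 1)))"

text \<open>Action of B: (B - theta*_i) m_i = phi_i m_{i-1}  (phi_0 = 0).\<close>
definition actB :: "'a::field \<Rightarrow> 'a \<Rightarrow> 'a \<Rightarrow> 'a \<Rightarrow> 'a \<Rightarrow> (nat \<Rightarrow> 'a) \<Rightarrow> (nat \<Rightarrow> 'a)" where
  "actB q a b c lam v = (\<lambda>i. thetas q b lam i * v i + phi q a b c lam (Suc i) * v (Suc i))"

definition gamma_val :: "'a::field \<Rightarrow> 'a \<Rightarrow> 'a \<Rightarrow> 'a \<Rightarrow> 'a \<Rightarrow> 'a" where
  "gamma_val q a b c lam =
     (a + inverse a) * (b + inverse b) + (c + inverse c) * (lam * q + inverse lam * inverse q)"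

text \<open>Action of C, forced by centrality of
  C + (qAB - q^{-1}BA)/(q^2-q^{-2}) = gamma/(q+q^{-1}).\<close>
definition actC :: "'a::field \<Rightarrow> 'a \<Rightarrow> 'a \<Rightarrow> 'a \<Rightarrow> 'a \<Rightarrow> (nat \<Rightarrow> 'a) \<Rightarrow> (nat \<Rightarrow> 'a)" where
  "actC q a b c lam v =
     (\<lambda>i. gamma_val q a b c lam / (q + inverse q) * v i
          - (q * actA q a lam (actB q a b c lam v) i
             - inverse q * actB q a b c lam (actA q a lam v) i) / (q^2 - inverse q ^ 2))"

text \<open>Submodules of M_lambda(a,b,c): subspaces (of finitely supported
  vectors) invariant under A, B, C (alpha, beta, gamma act as scalars).\<close>
definition is_submodule :: "'a::field \<Rightarrow> 'a \<Rightarrow> 'a \<Rightarrow> 'a \<Rightarrow> 'a \<Rightarrow> (nat \<Rightarrow> 'a) set \<Rightarrow> bool" where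
  "is_submodule q a b c lam U \<longleftrightarrow>
     (\<forall>v\<in>U. fin_supp v) \<and> (\<lambda>_. 0) \<in> U \<and>
     (\<forall>v\<in>U. \<forall>w\<in>U. (\<lambda>i. v i + w i) \<in> U) \<and>
     (\<forall>v\<in>U. \<forall>s. (\<lambda>i. s * v i) \<in> U) \<and>
     (\<forall>v\<in>U. actA q a lam v \<in> U) \<and>
     (\<forall>v\<in>U. actB q a b c lam v \<in> U) \<and>
     (\<forall>v\<in>U. actC q a b c lam v \<in> U)"

definition marginal_weight_quot ::
  "'a::field \<Rightarrow> 'a \<Rightarrow> 'a \<Rightarrow> 'a \<Rightarrow> 'a \<Rightarrow> (nat \<Rightarrow> 'a) set \<Rightarrow> 'a \<Rightarrow> (nat \<Rightarrow> 'a) \<Rightarrow> bool" where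
  "marginal_weight_quot q a b c lam U mu v \<longleftrightarrow>
     v \<notin> U \<and>
     (\<lambda>i. actB q a b c lam v i - (mu + inverse mu) * v i) \<in> U \<and>
     (\<exists>e. (\<lambda>i. (let w = actA q a lam v in
                 actB q a b c lam w i - (mu * q^2 + inverse mu * inverse q ^ 2) * w i)
               - e * v i) \<in> U)"

definition lin_dep_quot :: "(nat \<Rightarrow> 'a::field) set \<Rightarrow> (nat \<Rightarrow> 'a) \<Rightarrow> (nat \<Rightarrow> 'a) \<Rightarrow> bool" where
  "lin_dep_quot U v w \<longleftrightarrow> (\<exists>x y. (x \<noteq> 0 \<or> y \<noteq> 0) \<and> (\<lambda>i. x * v i + y * w i) \<in> U)"

end

theory Submission
  imports Defs
begin

lemma B_m0: "actB q a b c lam (m 0) = (\<lambda>i. thetas q b lam 0 * m 0 i)"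
  by (rule ext) (simp add: actB_def basis_vec_def)

lemma BA_m0:
  "(\<lambda>i. (let w = actA q a lam (m 0) in actB q a b c lam w i - k * w i))
   = (\<lambda>i. (theta q a lam 0 * (thetas q b lam 0 - k) + phi q a b c lam 1) * m 0 i
          + (thetas q b lam 1 - k) * m 1 i)"
proof (rule ext)
  fix i :: nat
  show "(let w = actA q a lam (m 0) in actB q a b c lam w i - k * w i)
   = (theta q a lam 0 * (thetas q b lam 0 - k) + phi q a b c lam 1) * m 0 i
          + (thetas q b lam 1 - k) * m 1 i"
    by (cases "i = 0"; cases "i = 1")
       (auto simp: actA_def actB_def basis_vec_def Let_def algebra_simps)
qed

lemma BA_e:
  "(\<lambda>i. (let w = actA q a lam (m 0) in actB q a b c lam w i - k * w i) - e * m 0 i)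
   = (\<lambda>i. (theta q a lam 0 * (thetas q b lam 0 - k) + phi q a b c lam 1 - e) * m 0 i
          + (thetas q b lam 1 - k) * m 1 i)"
proof (rule ext)
  fix i :: nat
  show "(let w = actA q a lam (m 0) in actB q a b c lam w i - k * w i) - e * m 0 i
   = (theta q a lam 0 * (thetas q b lam 0 - k) + phi q a b c lam 1 - e) * m 0 i
          + (thetas q b lam 1 - k) * m 1 i"
    by (cases "i = 0"; cases "i = 1")
       (auto simp: actA_def actB_def basis_vec_def Let_def algebra_simps)
qed

lemma t1_lem: "q \<noteq> 0 \<Longrightarrow> b \<noteq> 0 \<Longrightarrow> lam \<noteq> (0::'a::field) \<Longrightarrow> thetas q b lam 1 - (b / lam * q^2 + inverse (b / lam) * inverse q ^ 2) = 0"
    by (simp add: thetas_def field_simps eval_nat_numeral)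
lemma d_lem: "q \<noteq> 0 \<Longrightarrow> b \<noteq> 0 \<Longrightarrow> lam \<noteq> (0::'a::field) \<Longrightarrow> thetas q b lam 1 - (lam / b * q^2 + inverse (lam / b) * inverse q ^ 2) = (b / lam - lam / b) * (q^2 - inverse q ^ 2)"
    by (simp add: thetas_def field_simps eval_nat_numeral)

lemma q4: 
  fixes q :: "'a::field"
  assumes "root_of_unity q" "unity_order q \<notin> {1, 2, 4}"
  shows "q ^ 4 \<noteq> 1"
proof
  assume h: "q ^ 4 = 1"
  let ?P = "\<lambda>n::nat. n > 0 \<and> q ^ n = 1"
  have P4: "?P 4" using h by simp
  have le: "unity_order q \<le> 4" unfolding unity_order_def by (rule Least_le) (rule P4)
  have Pu: "?P (unity_order q)" unfolding unity_order_def by (rule LeastI) (rule P4)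
  have n: "unity_order q \<noteq> 1" "unity_order q \<noteq> 2" "unity_order q \<noteq> 4" using assms(2) by auto
  have "unity_order q = 3" using le Pu n by linarith
  with Pu have q3: "q ^ 3 = 1" by simp
  have "q ^ 4 = q ^ 3 * q" by (simp add: eval_nat_numeral)
  hence "q = 1" using h q3 by simp
  hence "?P 1" by simp
  hence "unity_order q \<le> 1" unfolding unity_order_def by (rule Least_le)
  with \<open>unity_order q = 3\<close> show False by simp
qed

theorem lemma3p5:
  fixes q a b c lam :: "'a::alg_closed_field"
    and U :: "(nat \<Rightarrow> 'a) set"
  assumes "root_of_unity q"
    and "unity_order q \<notin> {1, 2, 4}"
    and "a \<noteq> 0" and "b \<noteq> 0" and "c \<noteq> 0" and "lam \<noteq> 0"
    and "is_submodule q a b c lam U"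
    and "m 0 \<notin> U"
  shows "marginal_weight_quot q a b c lam U (b / lam) (m 0) \<and>
         (marginal_weight_quot q a b c lam U (lam / b) (m 0) \<longleftrightarrow>
           (b / lam = lam / b \<or> lin_dep_quot U (m 0) (m 1)))"
proof -
  have q0: "q \<noteq> 0"
  proof
    assume "q = 0"
    from assms(1) obtain n :: nat where "n > 0" "q ^ n = 1" unfolding root_of_unity_def by blast
    with \<open>q = 0\<close> show False by (simp add: power_0_left)
  qed
  have q4: "q ^ 4 \<noteq> 1" using q4 assms(1,2) by blast
  have zU: "(\<lambda>_. 0) \<in> U" and smU: "\<And>v s. v \<in> U \<Longrightarrow> (\<lambda>i. s * v i) \<in> U"
    using assms(7) unfolding is_submodule_def by simp_all
  have Bw: "(\<lambda>i. actB q a b c lam (m 0) i - (mu + inverse mu) * m 0 i) = (\<lambda>_. 0)"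
    if "mu = b / lam \<or> mu = lam / b" for mu
    using that assms(4,6) unfolding B_m0 by (auto simp: fun_eq_iff thetas_def basis_vec_def field_simps)
  define X where "X k = theta q a lam 0 * (thetas q b lam 0 - k) + phi q a b c lam 1" for k
  have t1: "thetas q b lam 1 - (b / lam * q^2 + inverse (b / lam) * inverse q ^ 2) = 0"
    using t1_lem[OF q0 assms(4,6)] .
  define d where "d = thetas q b lam 1 - (lam / b * q^2 + inverse (lam / b) * inverse q ^ 2)"
  have dfac: "d = (b / lam - lam / b) * (q^2 - inverse q ^ 2)"
    unfolding d_def by (rule d_lem[OF q0 assms(4,6)])
  have qq: "q^2 - inverse q ^ 2 \<noteq> 0"
  proof
    assume h: "q^2 - inverse q ^ 2 = 0"
    have iq: "inverse q ^ 2 * q ^ 2 = 1"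
      by (metis q0 left_inverse power_mult_distrib power_one)
    have "q^2 * q^2 = (q^2 - inverse q ^ 2) * q^2 + inverse q ^ 2 * q^2"
      by (simp add: algebra_simps)
    also have "... = 1" unfolding h iq by simp
    finally have e1: "q^2 * q^2 = 1" .
    have e2: "q^4 = q^2 * q^2" by (simp add: eval_nat_numeral)
    have "q^4 = 1" using e2 e1 by (rule trans)
    with q4 show False by (rule notE)
  qed
  have d0: "d = 0 \<longleftrightarrow> b / lam = lam / b" using qq by (simp add: dfac)
  have part1: "marginal_weight_quot q a b c lam U (b / lam) (m 0)"
    unfolding marginal_weight_quot_def
  proof (intro conjI)
    show "m 0 \<notin> U" by fact
    show "(\<lambda>i. actB q a b c lam (m 0) i - (b / lam + inverse (b / lam)) * m 0 i) \<in> U"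
      unfolding Bw[OF disjI1[OF refl]] by (rule zU)
    define k1 where "k1 = b / lam * q^2 + inverse (b / lam) * inverse q ^ 2"
    define E1 where "E1 = theta q a lam 0 * (thetas q b lam 0 - k1) + phi q a b c lam 1"
    have t1': "thetas q b lam 1 - k1 = 0" unfolding k1_def by (rule t1)
    have z: "(\<lambda>i. (let w = actA q a lam (m 0) in actB q a b c lam w i - k1 * w i) - E1 * m 0 i) = (\<lambda>_. 0)"
      unfolding BA_e t1' E1_def by (simp only: diff_self mult_zero_left add_0_right)
    have "(\<lambda>i. (let w = actA q a lam (m 0) in actB q a b c lam w i - k1 * w i) - E1 * m 0 i) \<in> U"
      unfolding z by (rule zU)
    hence "\<exists>e. (\<lambda>i. (let w = actA q a lam (m 0) in actB q a b c lam w i - k1 * w i) - e * m 0 i) \<in> U"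
      by (rule exI[where x = E1])
    thus "\<exists>e. (\<lambda>i. (let w = actA q a lam (m 0) in actB q a b c lam w i
            - (b / lam * q^2 + inverse (b / lam) * inverse q ^ 2) * w i) - e * m 0 i) \<in> U"
      unfolding k1_def .
  qed
  have B2': "(\<lambda>i. actB q a b c lam (m 0) i - (lam / b + inverse (lam / b)) * m 0 i) = (\<lambda>_. 0)"
    by (rule Bw) (rule disjI2, rule refl)
  have B2: "(\<lambda>i. actB q a b c lam (m 0) i - (lam / b + inverse (lam / b)) * m 0 i) \<in> U"
    unfolding B2' by (rule zU)
  let ?k = "lam / b * q^2 + inverse (lam / b) * inverse q ^ 2"
  have eq2: "\<And>e. (\<lambda>i. (let w = actA q a lam (m 0) in actB q a b c lam w i - ?k * w i) - e * m 0 i)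
      = (\<lambda>i. (X ?k - e) * m 0 i + d * m 1 i)"
    unfolding BA_e X_def d_def by (rule refl)
  have part2: "marginal_weight_quot q a b c lam U (lam / b) (m 0) \<longleftrightarrow>
           (b / lam = lam / b \<or> lin_dep_quot U (m 0) (m 1))"
  proof
    assume "marginal_weight_quot q a b c lam U (lam / b) (m 0)"
    then obtain e where e: "(\<lambda>i. (X ?k - e) * m 0 i + d * m 1 i) \<in> U"
      unfolding marginal_weight_quot_def eq2 by blast
    show "b / lam = lam / b \<or> lin_dep_quot U (m 0) (m 1)"
    proof (cases "d = 0")
      case True
      then show ?thesis using d0 by blast
    next
      case False
      have "lin_dep_quot U (m 0) (m 1)" unfolding lin_dep_quot_def
        using False e by (intro exI[where x = "X ?k - e"] exI[where x = d]) simp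
      then show ?thesis by simp
    qed
  next
    assume h: "b / lam = lam / b \<or> lin_dep_quot U (m 0) (m 1)"
    have "\<exists>e. (\<lambda>i. (X ?k - e) * m 0 i + d * m 1 i) \<in> U"
    proof (cases "d = 0")
      case True
      have zz: "(\<lambda>i. (X ?k - X ?k) * m 0 i + d * m 1 i) = (\<lambda>_. 0)"
        unfolding True by (simp only: diff_self mult_zero_left add_0_right)
      have "(\<lambda>i. (X ?k - X ?k) * m 0 i + d * m 1 i) \<in> U" unfolding zz by (rule zU)
      then show ?thesis by (rule exI[where x = "X ?k"])
    next
      case False
      with h d0 obtain x y where xy: "x \<noteq> 0 \<or> y \<noteq> 0" "(\<lambda>i. x * m 0 i + y * m 1 i) \<in> U"
        unfolding lin_dep_quot_def by blast
      have "y \<noteq> 0"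
      proof
        assume "y = 0"
        with xy have "x \<noteq> 0" "(\<lambda>i. x * m 0 i) \<in> U" by auto
        hence "(\<lambda>i. inverse x * (x * m 0 i)) \<in> U" using smU by blast
        moreover have "(\<lambda>i. inverse x * (x * m 0 i)) = m 0"
          using \<open>x \<noteq> 0\<close> by (simp add: fun_eq_iff)
        ultimately have "m 0 \<in> U" by simp
        with assms(8) show False by simp
      qed
      have mem: "(\<lambda>i. (d / y) * (x * m 0 i + y * m 1 i)) \<in> U" using smU xy(2) by blast
      have eqK: "(\<lambda>i. (K - (K - d * x / y)) * m 0 i + d * m 1 i)
          = (\<lambda>i. (d / y) * (x * m 0 i + y * m 1 i))" for K
        using \<open>y \<noteq> 0\<close> by (simp add: fun_eq_iff field_simps)
      have eqf: "(\<lambda>i. (X ?k - (X ?k - d * x / y)) * m 0 i + d * m 1 i)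
          = (\<lambda>i. (d / y) * (x * m 0 i + y * m 1 i))" by (rule eqK)
      have "(\<lambda>i. (X ?k - (X ?k - d * x / y)) * m 0 i + d * m 1 i) \<in> U"
        unfolding eqf by (rule mem)
      then show ?thesis by (rule exI[where x = "X ?k - d * x / y"])
    qed
    thus "marginal_weight_quot q a b c lam U (lam / b) (m 0)"
      unfolding marginal_weight_quot_def eq2 using assms(8) B2 by blast
  qed
  show ?thesis using part1 part2 by blast
qed

end
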